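(* Let $D_{\mathrm{jnt}}$ be any distribution of $(\mathsf X,\bar{\mathsf Y},\mathsf Y)$ on $\mathcal X\times\{0,1\}\times\{0,1\}$, let $c,\bar c\in[0,1]$ and $\bar D\in\{\bar D_{\mathrm{DP}},\bar D_{\mathrm{EO}}\}$. For $\tau\ge0$ let $$V(\tau)=\inf\{\mathrm{CS}(f;D,c)\ :\ f\colon\mathcal X\to[0,1]\text{ measurable},\ \mathrm{CS}^\diamond(f;\bar D,\bar c)\ge\tau\}$$ and $F(\tau)=V(\tau)-V(0)$ (the fairness frontier). Then $F$ is convex on the set $T=\{\tau\ge0:\text{the constraint set above is nonempty}\}$.
   Context: $D$ is the law of $(\mathsf X,\mathsf Y)$, $\bar D_{\mathrm{DP}}$ the law of $(\mathsf X,\bar{\mathsf Y})$, $\bar D_{\mathrm{EO}}$ the law of $(\mathsf X,\bar{\mathsf Y})$ conditional on $\mathsf Y=1$. A randomised classifier $f\colon\mathcal X\to[0,1]$ predicts $1$ on $x$ with probability $f(x)$. For a distribution $E$ of $(\mathsf X,\mathsf Z)$ on $\mathcal X\times\{0,1\}$ with $p=\Pr(\mathsf Z=1)$: $\mathrm{FNR}(f;E)=\mathbb E_{\mathsf X\mid\mathsf Z=1}[1-f(\mathsf X)]$, $\mathrm{FPR}(f;E)=\mathbb E_{\mathsf X\mid\mathsf Z=0}[f(\mathsf X)]$, $\mathrm{CS}(f;E,c)=p(1-c)\,\mathrm{FNR}(f;E)+(1-p)c\,\mathrm{FPR}(f;E)$, and $\mathrm{CS}^\diamond(f;E,c)=\min\big(\mathrm{CS}(f;E,c),\mathrm{CS}(1-f;E,c)\big)$.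 *)

theory Defs
  imports "HOL-Probability.Probability"
begin

text \<open>Distributions E of (X, Z) on X x {0,1} are measures on MX (x) count_space UNIV,
  with Z encoded as a boolean (True = 1).\<close>

definition pZ :: "('x \<times> bool) measure \<Rightarrow> real" where
  "pZ E = measure E {z \<in> space E. snd z}"

definition FNR :: "('x \<Rightarrow> real) \<Rightarrow> ('x \<times> bool) measure \<Rightarrow> real" where
  "FNR f E = (\<integral>z. (1 - f (fst z)) * indicator {z. snd z} z \<partial>E) / pZ E"

definition FPR :: "('x \<Rightarrow> real) \<Rightarrow> ('x \<times> bool) measure \<Rightarrow> real" where
  "FPR f E = (\<integral>z. f (fst z) * indicator {z. \<not> snd z} z \<partial>E) / (1 - pZ E)"

definition CS :: "('x \<Rightarrow> real) \<Rightarrow> ('x \<times> bool) measure \<Rightarrow> real \<Rightarrow> real" where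
  "CS f E c = pZ E * (1 - c) * FNR f E + (1 - pZ E) * c * FPR f E"

definition CSd :: "('x \<Rightarrow> real) \<Rightarrow> ('x \<times> bool) measure \<Rightarrow> real \<Rightarrow> real" where
  "CSd f E c = min (CS f E c) (CS (\<lambda>x. 1 - f x) E c)"

definition D_of :: "'x measure \<Rightarrow> ('x \<times> bool \<times> bool) measure \<Rightarrow> ('x \<times> bool) measure" where
  "D_of MX Dj = distr Dj (MX \<Otimes>\<^sub>M count_space UNIV) (\<lambda>(x, yb, y). (x, y))"

definition D_DP :: "'x measure \<Rightarrow> ('x \<times> bool \<times> bool) measure \<Rightarrow> ('x \<times> bool) measure" where
  "D_DP MX Dj = distr Dj (MX \<Otimes>\<^sub>M count_space UNIV) (\<lambda>(x, yb, y). (x, yb))"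

definition D_EO :: "'x measure \<Rightarrow> ('x \<times> bool \<times> bool) measure \<Rightarrow> ('x \<times> bool) measure" where
  "D_EO MX Dj = distr (uniform_measure Dj {w \<in> space Dj. snd (snd w)})
                      (MX \<Otimes>\<^sub>M count_space UNIV) (\<lambda>(x, yb, y). (x, yb))"

definition classifier :: "'x measure \<Rightarrow> ('x \<Rightarrow> real) \<Rightarrow> bool" where
  "classifier MX f \<longleftrightarrow> f \<in> borel_measurable MX \<and> (\<forall>x \<in> space MX. 0 \<le> f x \<and> f x \<le> 1)"

definition feasible :: "'x measure \<Rightarrow> ('x \<times> bool) measure \<Rightarrow> real \<Rightarrow> real \<Rightarrow> ('x \<Rightarrow> real) set" where
  "feasible MX Db cb \<tau> = {f. classifier MX f \<and> CSd f Db cb \<ge> \<tau>}"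

definition V :: "'x measure \<Rightarrow> ('x \<times> bool) measure \<Rightarrow> real \<Rightarrow> ('x \<times> bool) measure \<Rightarrow> real \<Rightarrow> real \<Rightarrow> real" where
  "V MX D c Db cb \<tau> = Inf ((\<lambda>f. CS f D c) ` feasible MX Db cb \<tau>)"

definition frontier :: "'x measure \<Rightarrow> ('x \<times> bool) measure \<Rightarrow> real \<Rightarrow> ('x \<times> bool) measure \<Rightarrow> real \<Rightarrow> real \<Rightarrow> real" where
  "frontier MX D c Db cb \<tau> = V MX D c Db cb \<tau> - V MX D c Db cb 0"

end

theory Submission
  imports Defs
begin

lemma integ_aux:
  fixes E :: "('x \<times> bool) measure"
  assumes fin: "finite_measure E" and sE: "sets E = sets (MX \<Otimes>\<^sub>M count_space UNIV)"
    and f: "classifier MX f"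
  shows "integrable E (\<lambda>z. (1 - f (fst z)) * indicator {z. snd z} z)"
    "integrable E (\<lambda>z. f (fst z) * indicator {z. \<not> snd z} z)"
proof -
  interpret finite_measure E by fact
  have sp: "space E = space MX \<times> UNIV" using sets_eq_imp_space_eq[OF sE] by (simp add: space_pair_measure)
  have mf: "f \<in> borel_measurable MX" using f by (simp add: classifier_def)
  have "(\<lambda>z. f (fst z)) \<in> borel_measurable (MX \<Otimes>\<^sub>M count_space UNIV)"
    using mf by (rule measurable_compose[OF measurable_fst])
  then have m1: "(\<lambda>z. f (fst z)) \<in> borel_measurable E"
    unfolding measurable_cong_sets[OF sE refl] .
  have "(\<lambda>z. snd z) \<in> measurable (MX \<Otimes>\<^sub>M count_space UNIV) (count_space UNIV)"
    by (rule measurable_snd)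
  then have m2: "(\<lambda>z. snd z) \<in> measurable E (count_space UNIV)"
    unfolding measurable_cong_sets[OF sE refl] .
  have i1: "(\<lambda>z. indicator {z. snd z} z :: real) = (\<lambda>z. (if snd z then 1 else 0))"
    by (auto simp: indicator_def)
  have i2: "(\<lambda>z. indicator {z. \<not> snd z} z :: real) = (\<lambda>z. (if snd z then 0 else 1))"
    by (auto simp: indicator_def)
  have mi1: "(\<lambda>z. indicator {z. snd z} z :: real) \<in> borel_measurable E"
    unfolding i1 using m2 by (intro measurable_If) (auto simp: pred_def)
  have mi2: "(\<lambda>z. indicator {z. \<not> snd z} z :: real) \<in> borel_measurable E"
    unfolding i2 using m2 by (intro measurable_If) (auto simp: pred_def)
  show "integrable E (\<lambda>z. (1 - f (fst z)) * indicator {z. snd z} z)"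
    apply (rule integrable_const_bound[where B=1])
    using f sp apply (auto simp: classifier_def indicator_def intro!: AE_I2)[1]
    using m1 mi1 by simp
  show "integrable E (\<lambda>z. f (fst z) * indicator {z. \<not> snd z} z)"
    apply (rule integrable_const_bound[where B=1])
    using f sp apply (auto simp: classifier_def indicator_def intro!: AE_I2)[1]
    using m1 mi2 by simp
qed

lemma CS_affine:
  fixes E :: "('x \<times> bool) measure"
  assumes fin: "finite_measure E" and sE: "sets E = sets (MX \<Otimes>\<^sub>M count_space UNIV)"
    and f: "classifier MX f" and g: "classifier MX g" and uv: "u + v = 1"
  shows "CS (\<lambda>x. u * f x + v * g x) E c = u * CS f E c + v * CS g E c"
proof -
  note fi = integ_aux[OF fin sE f] and gi = integ_aux[OF fin sE g]
  have e1: "(\<lambda>z. (1 - (u * f (fst z) + v * g (fst z))) * indicator {z. snd z} z)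
     = (\<lambda>z. u * ((1 - f (fst z)) * indicator {z. snd z} z) + v * ((1 - g (fst z)) * indicator {z. snd z} z))"
    proof -
      have h: "1 - (u * a + v * b) = u * (1 - a) + v * (1 - b)" for a b :: real
        using uv by (simp add: algebra_simps)
      show ?thesis by (rule ext) (simp only: h distrib_right mult.assoc)
    qed
  have e2: "(\<lambda>z. (u * f (fst z) + v * g (fst z)) * indicator {z. \<not> snd z} z)
     = (\<lambda>z. u * (f (fst z) * indicator {z. \<not> snd z} z) + v * (g (fst z) * indicator {z. \<not> snd z} z))"
    by (simp add: fun_eq_iff algebra_simps)
  have I1: "(\<integral>z. (1 - (u * f (fst z) + v * g (fst z))) * indicator {z. snd z} z \<partial>E)
     = u * (\<integral>z. (1 - f (fst z)) * indicator {z. snd z} z \<partial>E) + v * (\<integral>z. (1 - g (fst z)) * indicator {z. snd z} z \<partial>E)"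
    unfolding e1 using fi gi by (simp add: Bochner_Integration.integral_add)
  have I2: "(\<integral>z. (u * f (fst z) + v * g (fst z)) * indicator {z. \<not> snd z} z \<partial>E)
     = u * (\<integral>z. f (fst z) * indicator {z. \<not> snd z} z \<partial>E) + v * (\<integral>z. g (fst z) * indicator {z. \<not> snd z} z \<partial>E)"
    unfolding e2 using fi gi by (simp add: Bochner_Integration.integral_add)
  show ?thesis
    unfolding CS_def FNR_def FPR_def I1 I2 by (simp add: add_divide_distrib distrib_left)
qed


lemma CS_nonneg:
  fixes E :: "('x \<times> bool) measure"
  assumes sE: "sets E = sets (MX \<Otimes>\<^sub>M count_space UNIV)"
    and f: "classifier MX f" and c: "0 \<le> c" "c \<le> 1"
  shows "0 \<le> CS f E c"
proof -
  have sp: "space E = space MX \<times> UNIV" using sets_eq_imp_space_eq[OF sE] by (simp add: space_pair_measure)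
  have X: "0 \<le> (\<integral>z. (1 - f (fst z)) * indicator {z. snd z} z \<partial>E)"
    by (rule Bochner_Integration.integral_nonneg) (use f sp in \<open>auto simp: classifier_def indicator_def\<close>)
  have Y: "0 \<le> (\<integral>z. f (fst z) * indicator {z. \<not> snd z} z \<partial>E)"
    by (rule Bochner_Integration.integral_nonneg) (use f sp in \<open>auto simp: classifier_def indicator_def\<close>)
  have h: "0 \<le> p * (X / p)" if "0 \<le> X" for p X :: real
    using that by (cases "p = 0") auto
  have "0 \<le> (1 - c) * (pZ E * ((\<integral>z. (1 - f (fst z)) * indicator {z. snd z} z \<partial>E) / pZ E))"
    using c by (intro mult_nonneg_nonneg[OF _ h[OF X]]) simp
  moreover have "0 \<le> c * ((1 - pZ E) * ((\<integral>z. f (fst z) * indicator {z. \<not> snd z} z \<partial>E) / (1 - pZ E)))"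
    by (rule mult_nonneg_nonneg[OF c(1) h[OF Y]])
  ultimately have "0 \<le> (1 - c) * (pZ E * ((\<integral>z. (1 - f (fst z)) * indicator {z. snd z} z \<partial>E) / pZ E))
     + c * ((1 - pZ E) * ((\<integral>z. f (fst z) * indicator {z. \<not> snd z} z \<partial>E) / (1 - pZ E)))"
    by (rule add_nonneg_nonneg)
  then show ?thesis unfolding CS_def FNR_def FPR_def by (simp only: ac_simps)
qed

lemma inf_comb:
  fixes A B :: "real set"
  assumes "A \<noteq> {}" "B \<noteq> {}" "0 \<le> u" "0 \<le> v" "u + v = 1"
    and "\<And>a b. a \<in> A \<Longrightarrow> b \<in> B \<Longrightarrow> t \<le> u * a + v * b"
  shows "t \<le> u * Inf A + v * Inf B"
proof (rule field_le_epsilon)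
  fix e :: real assume e: "0 < e"
  obtain a where a: "a \<in> A" "a < Inf A + e" using cInf_lessD[OF assms(1), of "Inf A + e"] e by auto
  obtain b where b: "b \<in> B" "b < Inf B + e" using cInf_lessD[OF assms(2), of "Inf B + e"] e by auto
  have "t \<le> u * a + v * b" using assms(6) a b by auto
  also have "\<dots> \<le> u * (Inf A + e) + v * (Inf B + e)"
    using a b assms(3,4) by (intro add_mono mult_left_mono) auto
  also have "\<dots> = u * Inf A + v * Inf B + (u + v) * e" by (simp add: algebra_simps)
  also have "\<dots> = u * Inf A + v * Inf B + e" using assms(5) by simp
  finally show "t \<le> u * Inf A + v * Inf B + e" .
qed

theorem lemma4:
  fixes MX :: "'x measure" and Dj :: "('x \<times> bool \<times> bool) measure"
    and Db :: "('x \<times> bool) measure" and c cb :: real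
  assumes "prob_space Dj"
    and "sets Dj = sets (MX \<Otimes>\<^sub>M count_space UNIV \<Otimes>\<^sub>M count_space UNIV)"
    and "0 \<le> c" "c \<le> 1" "0 \<le> cb" "cb \<le> 1"
    and "Db \<in> {D_DP MX Dj, D_EO MX Dj}"
  shows "convex_on {\<tau>. 0 \<le> \<tau> \<and> feasible MX Db cb \<tau> \<noteq> {}} (frontier MX (D_of MX Dj) c Db cb)"
proof -
  interpret P: prob_space Dj by fact
  note sDj = assms(2)
  have m1: "(\<lambda>(x, yb, y). (x, y)) \<in> measurable Dj (MX \<Otimes>\<^sub>M count_space UNIV)"
    unfolding measurable_cong_sets[OF sDj refl] by measurable
  have m2: "(\<lambda>(x, yb, y). (x, yb)) \<in> measurable Dj (MX \<Otimes>\<^sub>M count_space UNIV)"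
    unfolding measurable_cong_sets[OF sDj refl] by measurable
  define D where "D = D_of MX Dj"
  have finD: "finite_measure D" unfolding D_def D_of_def by (rule P.finite_measure_distr[OF m1])
  have sD: "sets D = sets (MX \<Otimes>\<^sub>M count_space UNIV)" unfolding D_def D_of_def by simp
  define A where "A = {w \<in> space Dj. snd (snd w)}"
  have "(\<lambda>w. snd (snd w)) \<in> measurable (MX \<Otimes>\<^sub>M count_space UNIV \<Otimes>\<^sub>M count_space UNIV) (count_space UNIV)"
    by measurable
  then have "(\<lambda>w. snd (snd w)) \<in> measurable Dj (count_space UNIV)"
    unfolding measurable_cong_sets[OF sDj refl] .
  then have "(\<lambda>w. snd (snd w)) -` {True} \<inter> space Dj \<in> sets Dj"
    by (rule measurable_sets) simp
  moreover have "(\<lambda>w. snd (snd w)) -` {True} \<inter> space Dj = A" by (auto simp: A_def)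
  ultimately have Asets: "A \<in> sets Dj" by simp
  have finU: "finite_measure (uniform_measure Dj A)"
  proof (rule finite_measureI)
    have "emeasure (uniform_measure Dj A) (space (uniform_measure Dj A)) = emeasure Dj A / emeasure Dj A"
      using Asets sets.sets_into_space[OF Asets] by (simp add: Int_absorb2)
    also have "\<dots> \<noteq> \<infinity>"
      by (cases "emeasure Dj A = 0") (simp_all add: P.emeasure_finite less_top[symmetric])
    finally show "emeasure (uniform_measure Dj A) (space (uniform_measure Dj A)) \<noteq> \<infinity>" .
  qed
  have m2': "(\<lambda>(x, yb, y). (x, yb)) \<in> measurable (uniform_measure Dj A) (MX \<Otimes>\<^sub>M count_space UNIV)"
    using m2 by simp
  have finDb: "finite_measure Db" and sDb: "sets Db = sets (MX \<Otimes>\<^sub>M count_space UNIV)"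
    using assms(7) P.finite_measure_distr[OF m2] finite_measure.finite_measure_distr[OF finU m2']
    unfolding D_DP_def D_EO_def A_def[symmetric] by auto
  have comb: "(\<lambda>z. u * f z + v * g z) \<in> feasible MX Db cb (u * x + v * y)"
    and combCS: "CS (\<lambda>z. u * f z + v * g z) D c = u * CS f D c + v * CS g D c"
    if f: "f \<in> feasible MX Db cb x" and g: "g \<in> feasible MX Db cb y"
      and u: "0 \<le> u" and v: "0 \<le> v" and uv: "u + v = 1" for f g x y u v
  proof -
    have cf: "classifier MX f" and cg: "classifier MX g" and fx: "CSd f Db cb \<ge> x" and gy: "CSd g Db cb \<ge> y"
      using f g by (auto simp: feasible_def)
    show "CS (\<lambda>z. u * f z + v * g z) D c = u * CS f D c + v * CS g D c"
      by (rule CS_affine[OF finD sD cf cg uv])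
    have cf': "classifier MX (\<lambda>x. 1 - f x)" and cg': "classifier MX (\<lambda>x. 1 - g x)"
      using cf cg by (auto simp: classifier_def)
    have ccomb: "classifier MX (\<lambda>z. u * f z + v * g z)"
    proof -
      have "0 \<le> u * f z + v * g z \<and> u * f z + v * g z \<le> 1" if "z \<in> space MX" for z
      proof -
        have "0 \<le> f z" "f z \<le> 1" "0 \<le> g z" "g z \<le> 1" using cf cg that by (auto simp: classifier_def)
        moreover have "u * f z \<le> u" "v * g z \<le> v" using u v \<open>f z \<le> 1\<close> \<open>g z \<le> 1\<close>
          by (simp_all add: mult_left_le)
        ultimately show ?thesis using u v uv by simp
      qed
      then show ?thesis using cf cg by (auto simp: classifier_def)
    qed
    have e: "(\<lambda>z. 1 - (u * f z + v * g z)) = (\<lambda>z. u * (1 - f z) + v * (1 - g z))"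
      using uv by (auto simp: fun_eq_iff algebra_simps)
    have a1: "CS (\<lambda>z. u * f z + v * g z) Db cb = u * CS f Db cb + v * CS g Db cb"
      by (rule CS_affine[OF finDb sDb cf cg uv])
    have a2: "CS (\<lambda>z. 1 - (u * f z + v * g z)) Db cb = u * CS (\<lambda>x. 1 - f x) Db cb + v * CS (\<lambda>x. 1 - g x) Db cb"
      unfolding e by (rule CS_affine[OF finDb sDb cf' cg' uv])
    have "u * x \<le> u * CS f Db cb" "u * x \<le> u * CS (\<lambda>x. 1 - f x) Db cb"
      "v * y \<le> v * CS g Db cb" "v * y \<le> v * CS (\<lambda>x. 1 - g x) Db cb"
      using fx gy u v by (auto simp: CSd_def intro!: mult_left_mono)
    then have "u * x + v * y \<le> CSd (\<lambda>z. u * f z + v * g z) Db cb"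
      unfolding CSd_def a1 a2 by simp
    then show "(\<lambda>z. u * f z + v * g z) \<in> feasible MX Db cb (u * x + v * y)"
      using ccomb by (simp add: feasible_def)
  qed
  define S where "S = {\<tau>. 0 \<le> \<tau> \<and> feasible MX Db cb \<tau> \<noteq> {}}"
  have bdd: "bdd_below ((\<lambda>f. CS f D c) ` feasible MX Db cb t)" for t
    by (rule bdd_belowI[where m=0]) (auto simp: feasible_def intro!: CS_nonneg[OF sD _ assms(3,4)])
  have key: "V MX D c Db cb (u * x + v * y) \<le> u * V MX D c Db cb x + v * V MX D c Db cb y"
    if x: "x \<in> S" and y: "y \<in> S" and u: "0 \<le> u" and v: "0 \<le> v" and uv: "u + v = 1" for x y u v
    unfolding V_def
  proof (rule inf_comb[OF _ _ u v uv])
    show "(\<lambda>f. CS f D c) ` feasible MX Db cb x \<noteq> {}" "(\<lambda>f. CS f D c) ` feasible MX Db cb y \<noteq> {}"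
      using x y by (auto simp: S_def)
    fix a b assume a: "a \<in> (\<lambda>f. CS f D c) ` feasible MX Db cb x" and b: "b \<in> (\<lambda>f. CS f D c) ` feasible MX Db cb y"
    then obtain f g where f: "f \<in> feasible MX Db cb x" "a = CS f D c" and g: "g \<in> feasible MX Db cb y" "b = CS g D c"
      by auto
    have "Inf ((\<lambda>f. CS f D c) ` feasible MX Db cb (u * x + v * y)) \<le> CS (\<lambda>z. u * f z + v * g z) D c"
      by (rule cInf_lower[OF imageI[OF comb[OF f(1) g(1) u v uv]] bdd])
    then show "Inf ((\<lambda>f. CS f D c) ` feasible MX Db cb (u * x + v * y)) \<le> u * a + v * b"
      using combCS[OF f(1) g(1) u v uv] f g by simp
  qed
  have cS: "convex S"
  proof (rule convexI)
    fix x y u v :: real assume x: "x \<in> S" and y: "y \<in> S" and u: "0 \<le> u" and v: "0 \<le> v" and uv: "u + v = 1"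
    from x y obtain f g where "f \<in> feasible MX Db cb x" "g \<in> feasible MX Db cb y" by (auto simp: S_def)
    from comb[OF this u v uv] have "feasible MX Db cb (u * x + v * y) \<noteq> {}" by auto
    moreover have "0 \<le> u * x + v * y" using x y u v by (auto simp: S_def)
    ultimately show "u *\<^sub>R x + v *\<^sub>R y \<in> S" by (simp add: S_def)
  qed
  have "convex_on S (frontier MX D c Db cb)"
    unfolding convex_on_def
  proof (intro conjI cS ballI allI impI)
    fix x y u v :: real assume x: "x \<in> S" and y: "y \<in> S" and u: "0 \<le> u" and v: "0 \<le> v" and uv: "u + v = 1"
    have "frontier MX D c Db cb (u * x + v * y) \<le> u * V MX D c Db cb x + v * V MX D c Db cb y - V MX D c Db cb 0"
      using key[OF x y u v uv] by (simp add: frontier_def)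
    also have "\<dots> = u * frontier MX D c Db cb x + v * frontier MX D c Db cb y"
    proof -
      have "V MX D c Db cb 0 = (u + v) * V MX D c Db cb 0" using uv by simp
      then show ?thesis by (simp add: frontier_def algebra_simps)
    qed
    finally show "frontier MX D c Db cb (u *\<^sub>R x + v *\<^sub>R y) \<le> u * frontier MX D c Db cb x + v * frontier MX D c Db cb y"
      by simp
  qed
  then show ?thesis by (simp add: S_def D_def)
qed

end
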